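(* Let $0<s<\tfrac{1}{2}$ and set $$\gamma(s)=\gamma_1(s)\,\gamma_2(s),\qquad \gamma_1(s)=\frac{1}{2}\left(\frac{2^{1-2s}-1}{1-2^{-2s}}\right),\qquad \gamma_2(s)=\frac{2-2^{-2s}}{1-2^{-2s}}.$$ Then for every $\varphi\in L^2(\mathbb{R})$ with $\|\varphi\|_{L^2(\mathbb{R})}=1$, $$\mathcal{Q}_s(|\varphi|)\cdot\mathcal{E}_s(\varphi)\geq \gamma(s),$$ where $$\mathcal{Q}_s(|\varphi|)=\iint_{\mathbb{R}^2}|x-y|^{2s-1}|\varphi(x)|\,|\varphi(y)|\,dx\,dy,\qquad \mathcal{E}_s(\varphi)=\iint_{\mathbb{R}^2}\frac{|\varphi(x)-\varphi(y)|^2}{|x-y|^{1+2s}}\,dx\,dy .$$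
   Context: Functions may be complex valued. $\mathcal{E}_s$ is the fractional energy quadratic form of order $s$ and $\mathcal{Q}_s$ is the fractional position quadratic form. For general $\psi$ the position form is $\mathcal{Q}_s(\psi)=\iint_{\mathbb{R}^2}|x-y|^{2s}\psi(x)\overline{\psi}(y)\,\frac{dx\,dy}{|x-y|}$. The theorem applies it to $\psi=|\varphi|$, which gives the displayed formula. *)

theory Defs
  imports "HOL-Analysis.Analysis"
begin

definition gamma1 :: "real \<Rightarrow> real" where
  "gamma1 s = (1/2) * (((2::real) powr (1 - 2 * s) - 1) / (1 - (2::real) powr (- (2 * s))))"

definition gamma2 :: "real \<Rightarrow> real" where
  "gamma2 s = ((2::real) - 2 powr (- (2 * s))) / (1 - (2::real) powr (- (2 * s)))"

definition gamma :: "real \<Rightarrow> real" where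
  "gamma s = gamma1 s * gamma2 s"

definition Qs :: "real \<Rightarrow> (real \<Rightarrow> complex) \<Rightarrow> ennreal" where
  "Qs s phi = (\<integral>\<^sup>+ (p::real \<times> real). ennreal (abs (fst p - snd p) powr (2 * s - 1) * cmod (phi (fst p)) * cmod (phi (snd p)))
                 \<partial>(lborel \<Otimes>\<^sub>M lborel))"

definition Es :: "real \<Rightarrow> (real \<Rightarrow> complex) \<Rightarrow> ennreal" where
  "Es s phi = (\<integral>\<^sup>+ (p::real \<times> real). ennreal ((cmod (phi (fst p) - phi (snd p)))\<^sup>2 / abs (fst p - snd p) powr (1 + 2 * s))
                 \<partial>(lborel \<Otimes>\<^sub>M lborel))"

end

theory Submission
  imports Defs
begin

lemma D1:
  assumes "0<s" "0<R"
  shows "(\<integral>\<^sup>+h. ennreal (indicator {R..} h * h powr (- 1 - 2 * s)) \<partial>lborel) = ennreal (R powr (- 2 * s) / (2 * s))"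
proof -
  have "((\<lambda>x. x powr (- 1 - 2 * s)) has_integral -(R powr ((- 1 - 2 * s)+1)) / ((- 1 - 2 * s)+1)) {R..}"
    by (rule has_integral_powr_to_inf) (use assms in auto)
  also have "-(R powr ((- 1 - 2 * s)+1)) / ((- 1 - 2 * s)+1) = R powr (- 2 * s) / (2 * s)"
    using assms by (simp add: field_simps)
  finally have h: "((\<lambda>x. x powr (- 1 - 2 * s)) has_integral R powr (- 2 * s) / (2 * s)) {R..}" .
  show ?thesis
    using nn_integral_has_integral_lebesgue[OF _ h] by simp
qed

lemma D2:
  assumes "0<s" "0<R"
  shows "(\<integral>\<^sup>+h. ennreal (if R \<le> \<bar>h\<bar> then \<bar>h\<bar> powr (- 1 - 2 * s) else 0) \<partial>lborel) = ennreal (R powr (- 2 * s) / s)"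
proof -
  define g1 where "g1 h = ennreal (indicator {R..} h * h powr (- 1 - 2 * s))" for h
  have g1m[measurable]: "g1 \<in> borel_measurable borel" unfolding g1_def by measurable
  have pt: "ennreal (if R \<le> \<bar>h\<bar> then \<bar>h\<bar> powr (- 1 - 2 * s) else 0) = g1 h + g1 (0 + (-1) * h)" for h
    using assms unfolding g1_def by (auto simp: indicator_def)
  have "(\<integral>\<^sup>+h. ennreal (if R \<le> \<bar>h\<bar> then \<bar>h\<bar> powr (- 1 - 2 * s) else 0) \<partial>lborel)
      = (\<integral>\<^sup>+h. g1 h \<partial>lborel) + (\<integral>\<^sup>+h. g1 (0 + (-1) * h) \<partial>lborel)"
    unfolding pt by (rule nn_integral_add) auto
  also have "(\<integral>\<^sup>+h. g1 (0 + (-1) * h) \<partial>lborel) = (\<integral>\<^sup>+h. g1 h \<partial>lborel)"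
    using nn_integral_real_affine[OF g1m, of "-1" 0] by simp
  also have "(\<integral>\<^sup>+h. g1 h \<partial>lborel) = ennreal (R powr (- 2 * s) / (2 * s))"
    unfolding g1_def by (rule D1[OF assms])
  finally show ?thesis using assms by (simp add: ennreal_plus[symmetric] del: ennreal_plus)
qed
lemma u_bound:
  assumes "0 < s" "s < 1/2"
  shows "(2::real) powr (- (2 * s)) \<le> 1 - s"
proof -
  have "exp ((1 - 2 * s) *\<^sub>R 0 + (2 * s) *\<^sub>R (- ln 2)) \<le> (1 - 2 * s) * exp 0 + (2 * s) * exp (- ln 2)"
    by (rule convex_onD[OF exp_convex]) (use assms in auto)
  moreover have "exp (- ln 2) = (1/2::real)" by (simp add: exp_minus)
  moreover have "(2::real) powr (- (2 * s)) = exp ((1 - 2 * s) * 0 + (2 * s) * (- ln 2))"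
    by (simp add: powr_def)
  ultimately show ?thesis by simp
qed

lemma gamma_bound:
  assumes "0 < s" "s < 1/2"
  shows "gamma s \<le> 1 / (2 * s\<^sup>2)"
proof -
  define u where "u = (2::real) powr (- (2 * s))"
  have u1: "u \<le> 1 - s" using u_bound[OF assms] by (simp add: u_def)
  have u0: "0 < u" by (simp add: u_def)
  have e: "(2::real) powr (1 - 2 * s) = 2 * u"
    unfolding u_def using powr_add[of "2::real" 1 "- (2 * s)"] by simp
  have g: "gamma s = (2*u - 1) * (2 - u) / (2 * (1 - u)\<^sup>2)"
    unfolding gamma_def gamma1_def gamma2_def e u_def[symmetric] by (simp add: power2_eq_square field_simps)
  have p1: "(2*u - 1) * (2 - u) = 1 - (3 - 2*u) * (1 - u)" by (simp add: algebra_simps)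
  have p2: "0 \<le> (3 - 2*u) * (1 - u)" using u1 assms by (intro mult_nonneg_nonneg) auto
  have p: "(2*u - 1) * (2 - u) \<le> 1" using p1 p2 by linarith
  have q: "s\<^sup>2 \<le> (1 - u)\<^sup>2" using u1 assms by (intro power_mono) auto
  have "gamma s \<le> 1 / (2 * (1 - u)\<^sup>2)" unfolding g
    by (rule divide_right_mono[OF p]) simp
  also have "\<dots> \<le> 1 / (2 * s\<^sup>2)"
    using q assms u1 by (intro divide_left_mono mult_pos_pos) auto
  finally show ?thesis .
qed
lemma key:
  fixes s R :: real and phi :: "real \<Rightarrow> complex"
  assumes s0: "0 < s" and s1: "s < 1/2" and R0: "0 < R"
    and pm: "phi \<in> borel_measurable lborel"
    and nrm: "(\<integral>\<^sup>+ x. ennreal ((cmod (phi x))\<^sup>2) \<partial>lborel) = 1"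
  shows "ennreal (2 * (R powr (- 2 * s) / s)) \<le> Es s phi + ennreal (2 * R powr (- (4 * s))) * Qs s phi"
proof -
  have [measurable]: "phi \<in> borel_measurable borel" using pm by simp
  have PS: "pair_sigma_finite lborel lborel"
    by (simp add: pair_sigma_finite_def lborel.sigma_finite_measure_axioms)
  define G where "G h = (if R \<le> \<bar>h\<bar> then \<bar>h\<bar> powr (- 1 - 2 * s) else 0)" for h :: real
  have Gm[measurable]: "G \<in> borel_measurable borel" unfolding G_def by measurable
  have G0: "0 \<le> G h" for h unfolding G_def by auto
  define D where "D = ennreal (R powr (- 2 * s) / s)"
  have DG: "(\<integral>\<^sup>+h. ennreal (G h) \<partial>lborel) = D"
    unfolding G_def D_def by (rule D2[OF s0 R0])
  define L1 where "L1 p = ennreal ((cmod (phi (fst p)))\<^sup>2 * G (fst p - snd p))" for p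
  define L2 where "L2 p = ennreal ((cmod (phi (snd p)))\<^sup>2 * G (fst p - snd p))" for p
  have L1m[measurable]: "L1 \<in> borel_measurable (lborel \<Otimes>\<^sub>M lborel)" unfolding L1_def by measurable
  have L2m[measurable]: "L2 \<in> borel_measurable (lborel \<Otimes>\<^sub>M lborel)" unfolding L2_def by measurable
  have inner1: "(\<integral>\<^sup>+y. L1 (x, y) \<partial>lborel) = ennreal ((cmod (phi x))\<^sup>2) * D" for x
  proof -
    have "(\<integral>\<^sup>+y. L1 (x, y) \<partial>lborel) = (\<integral>\<^sup>+y. ennreal ((cmod (phi x))\<^sup>2) * ennreal (G (x + (-1) * y)) \<partial>lborel)"
      unfolding L1_def by (intro nn_integral_cong) (simp add: ennreal_mult G0)
    also have "\<dots> = ennreal ((cmod (phi x))\<^sup>2) * (\<integral>\<^sup>+y. ennreal (G (x + (-1) * y)) \<partial>lborel)"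
      by (rule nn_integral_cmult) measurable
    also have "(\<integral>\<^sup>+y. ennreal (G (x + (-1) * y)) \<partial>lborel) = (\<integral>\<^sup>+h. ennreal (G h) \<partial>lborel)"
      using nn_integral_real_affine[of "\<lambda>h. ennreal (G h)" "-1" x] by simp
    finally show ?thesis using DG by simp
  qed
  have inner2: "(\<integral>\<^sup>+x. L2 (x, y) \<partial>lborel) = ennreal ((cmod (phi y))\<^sup>2) * D" for y
  proof -
    have "(\<integral>\<^sup>+x. L2 (x, y) \<partial>lborel) = (\<integral>\<^sup>+x. ennreal ((cmod (phi y))\<^sup>2) * ennreal (G ((-y) + 1 * x)) \<partial>lborel)"
      unfolding L2_def by (intro nn_integral_cong) (simp add: ennreal_mult G0)
    also have "\<dots> = ennreal ((cmod (phi y))\<^sup>2) * (\<integral>\<^sup>+x. ennreal (G ((-y) + 1 * x)) \<partial>lborel)"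
      by (rule nn_integral_cmult) measurable
    also have "(\<integral>\<^sup>+x. ennreal (G ((-y) + 1 * x)) \<partial>lborel) = (\<integral>\<^sup>+h. ennreal (G h) \<partial>lborel)"
      using nn_integral_real_affine[of "\<lambda>h. ennreal (G h)" "1" "-y"] by simp
    finally show ?thesis using DG by simp
  qed
  have I1: "integral\<^sup>N (lborel \<Otimes>\<^sub>M lborel) L1 = D"
  proof -
    have "integral\<^sup>N (lborel \<Otimes>\<^sub>M lborel) L1 = (\<integral>\<^sup>+x. \<integral>\<^sup>+y. L1 (x, y) \<partial>lborel \<partial>lborel)"
      by (rule sigma_finite_measure.nn_integral_fst[OF lborel.sigma_finite_measure_axioms, symmetric]) measurable
    also have "\<dots> = (\<integral>\<^sup>+x. ennreal ((cmod (phi x))\<^sup>2) * D \<partial>lborel)" by (simp add: inner1)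
    also have "\<dots> = (\<integral>\<^sup>+x. ennreal ((cmod (phi x))\<^sup>2) \<partial>lborel) * D"
      by (rule nn_integral_multc) measurable
    finally show ?thesis using nrm by simp
  qed
  have I2: "integral\<^sup>N (lborel \<Otimes>\<^sub>M lborel) L2 = D"
  proof -
    have "integral\<^sup>N (lborel \<Otimes>\<^sub>M lborel) L2 = (\<integral>\<^sup>+y. \<integral>\<^sup>+x. L2 (x, y) \<partial>lborel \<partial>lborel)"
      by (rule pair_sigma_finite.nn_integral_snd[OF PS, symmetric]) measurable
    also have "\<dots> = (\<integral>\<^sup>+y. ennreal ((cmod (phi y))\<^sup>2) * D \<partial>lborel)" by (simp add: inner2)
    also have "\<dots> = (\<integral>\<^sup>+y. ennreal ((cmod (phi y))\<^sup>2) \<partial>lborel) * D"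
      by (rule nn_integral_multc) measurable
    finally show ?thesis using nrm by simp
  qed
  define c where "c = 2 * R powr (- (4 * s))"
  define EI where "EI p = ennreal ((cmod (phi (fst p) - phi (snd p)))\<^sup>2 / \<bar>fst p - snd p\<bar> powr (1 + 2 * s))" for p :: "real \<times> real"
  define QI where "QI p = ennreal (\<bar>fst p - snd p\<bar> powr (2 * s - 1) * cmod (phi (fst p)) * cmod (phi (snd p)))" for p :: "real \<times> real"
  have EIm[measurable]: "EI \<in> borel_measurable (lborel \<Otimes>\<^sub>M lborel)" unfolding EI_def by measurable
  have QIm[measurable]: "QI \<in> borel_measurable (lborel \<Otimes>\<^sub>M lborel)" unfolding QI_def by measurable
  have pt: "L1 p + L2 p \<le> EI p + ennreal c * QI p" for p
  proof -
    obtain x y where p: "p = (x, y)" by (cases p)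
    show ?thesis
    proof (cases "R \<le> \<bar>x - y\<bar>")
      case False
      then show ?thesis unfolding p L1_def L2_def G_def by simp
    next
      case True
      define K where "K = \<bar>x - y\<bar>"
      define a where "a = cmod (phi x)"
      define b where "b = cmod (phi y)"
      have K0: "0 < K" using True R0 unfolding K_def by linarith
      have RK: "R \<le> K" using True unfolding K_def .
      have a0: "0 \<le> a" and b0: "0 \<le> b" unfolding a_def b_def by auto
      have k: "K powr (- 1 - 2 * s) = 1 / K powr (1 + 2 * s)"
        by (simp add: powr_minus_divide[symmetric])
      have k2: "K powr (- 1 - 2 * s) = K powr (2 * s - 1) * K powr (- (4 * s))"
        using K0 powr_add[of K "2 * s - 1" "- (4 * s)"] by (simp add: algebra_simps)
      have kR: "K powr (- (4 * s)) \<le> R powr (- (4 * s))"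
        using K0 RK R0 s0 by (intro powr_mono2') auto
      have diff: "(a - b)\<^sup>2 \<le> (cmod (phi x - phi y))\<^sup>2"
      proof -
        have "\<bar>a - b\<bar> \<le> cmod (phi x - phi y)"
          unfolding a_def b_def using norm_triangle_ineq3[of "phi x" "phi y"] by simp
        then have "\<bar>a - b\<bar>\<^sup>2 \<le> (cmod (phi x - phi y))\<^sup>2" by (intro power_mono) auto
        then show ?thesis by simp
      qed
      have kp: "0 \<le> K powr (- 1 - 2 * s)" by simp
      have e1: "(a\<^sup>2 + b\<^sup>2) * K powr (- 1 - 2 * s) = (a - b)\<^sup>2 * K powr (- 1 - 2 * s) + 2 * (a * b * K powr (- 1 - 2 * s))"
        by (simp add: power2_eq_square algebra_simps)
      have t1: "(a - b)\<^sup>2 * K powr (- 1 - 2 * s) \<le> (cmod (phi x - phi y))\<^sup>2 / K powr (1 + 2 * s)"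
        using mult_right_mono[OF diff kp] by (simp add: k)
      have t2: "2 * (a * b * K powr (- 1 - 2 * s)) \<le> c * (K powr (2 * s - 1) * a * b)"
      proof -
        have "a * b * K powr (- 1 - 2 * s) = (K powr (2 * s - 1) * a * b) * K powr (- (4 * s))"
          unfolding k2 by (simp add: algebra_simps)
        also have "\<dots> \<le> (K powr (2 * s - 1) * a * b) * R powr (- (4 * s))"
          using a0 b0 kR by (intro mult_left_mono) auto
        finally show ?thesis unfolding c_def by (simp add: algebra_simps)
      qed
      have real: "(a\<^sup>2 + b\<^sup>2) * K powr (- 1 - 2 * s) \<le> (cmod (phi x - phi y))\<^sup>2 / K powr (1 + 2 * s) + c * (K powr (2 * s - 1) * a * b)"
        using e1 t1 t2 by linarith
      have c0: "0 \<le> c" unfolding c_def by simp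
      have "L1 p + L2 p = ennreal ((a\<^sup>2 + b\<^sup>2) * K powr (- 1 - 2 * s))"
        unfolding p L1_def L2_def G_def using True
        by (simp add: a_def b_def K_def ennreal_plus[symmetric] distrib_right del: ennreal_plus)
      also have "\<dots> \<le> ennreal ((cmod (phi x - phi y))\<^sup>2 / K powr (1 + 2 * s) + c * (K powr (2 * s - 1) * a * b))"
        using real by (rule ennreal_leI)
      also have "\<dots> = EI p + ennreal c * QI p"
        unfolding p EI_def QI_def using c0 a0 b0
        by (simp add: K_def a_def b_def ennreal_plus[symmetric] ennreal_mult[symmetric] del: ennreal_plus)
      finally show ?thesis .
    qed
  qed
  have "ennreal (2 * (R powr (- 2 * s) / s)) = D + D"
    unfolding D_def using s0 by (simp add: ennreal_plus[symmetric] del: ennreal_plus)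
  also have "\<dots> = (\<integral>\<^sup>+p. L1 p + L2 p \<partial>(lborel \<Otimes>\<^sub>M lborel))"
    using I1 I2 by (subst nn_integral_add) auto
  also have "\<dots> \<le> (\<integral>\<^sup>+p. EI p + ennreal c * QI p \<partial>(lborel \<Otimes>\<^sub>M lborel))"
    by (rule nn_integral_mono) (rule pt)
  also have "\<dots> = Es s phi + ennreal c * Qs s phi"
    unfolding Es_def Qs_def EI_def[symmetric] QI_def[symmetric]
    by (subst nn_integral_add) (auto simp: nn_integral_cmult)
  finally show ?thesis unfolding c_def .
qed
lemma AE_ex_lborel: "AE x in lborel. P (x::real) \<Longrightarrow> \<exists>x. P x"
proof (rule ccontr)
  assume a: "AE x in lborel. P x" "\<not> (\<exists>x. P x)"
  from a(1) have "AE (x::real) in lborel. False" by (rule eventually_mono) (use a(2) in auto)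
  then have "ae_filter (lborel::real measure) = bot" using trivial_limit_def by blast
  then show False by (simp add: ae_filter_eq_bot_iff)
qed

lemma zero_norm:
  fixes phi :: "real \<Rightarrow> complex"
  assumes "AE x in lborel. phi x = (0::complex)"
  shows "(\<integral>\<^sup>+ x. ennreal ((cmod (phi x))\<^sup>2) \<partial>lborel) = 0"
proof -
  have "(\<integral>\<^sup>+ x. ennreal ((cmod (phi x))\<^sup>2) \<partial>lborel) = (\<integral>\<^sup>+ (x::real). 0 \<partial>lborel)"
    by (rule nn_integral_cong_AE) (use assms in \<open>auto elim: eventually_mono\<close>)
  then show ?thesis by simp
qed

lemma Es_pos:
  fixes s :: real and phi :: "real \<Rightarrow> complex"
  assumes "0 < s" and pm: "phi \<in> borel_measurable lborel"
    and nrm: "(\<integral>\<^sup>+ x. ennreal ((cmod (phi x))\<^sup>2) \<partial>lborel) = 1"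
  shows "Es s phi \<noteq> 0"
proof
  assume E0: "Es s phi = 0"
  have [measurable]: "phi \<in> borel_measurable borel" using pm by simp
  have PS: "pair_sigma_finite lborel lborel"
    by (simp add: pair_sigma_finite_def lborel.sigma_finite_measure_axioms)
  have "AE p in lborel \<Otimes>\<^sub>M lborel. ennreal ((cmod (phi (fst p) - phi (snd p)))\<^sup>2 / \<bar>fst p - snd p\<bar> powr (1 + 2 * s)) = 0"
  proof -
    have m: "(\<lambda>p. ennreal ((cmod (phi (fst p) - phi (snd p)))\<^sup>2 / \<bar>fst p - snd p\<bar> powr (1 + 2 * s))) \<in> borel_measurable (lborel \<Otimes>\<^sub>M lborel)"
      by measurable
    show ?thesis using E0 unfolding Es_def nn_integral_0_iff_AE[OF m] .
  qed
  then have "AE p in lborel \<Otimes>\<^sub>M lborel. phi (fst p) = phi (snd p)"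
  proof (rule eventually_mono)
    fix p :: "real \<times> real"
    assume h: "ennreal ((cmod (phi (fst p) - phi (snd p)))\<^sup>2 / \<bar>fst p - snd p\<bar> powr (1 + 2 * s)) = 0"
    show "phi (fst p) = phi (snd p)"
    proof (cases "fst p = snd p")
      case False
      then have "0 < \<bar>fst p - snd p\<bar> powr (1 + 2 * s)" by simp
      moreover have "(cmod (phi (fst p) - phi (snd p)))\<^sup>2 / \<bar>fst p - snd p\<bar> powr (1 + 2 * s) \<le> 0"
        using h by (simp only: ennreal_eq_0_iff)
      ultimately have "(cmod (phi (fst p) - phi (snd p)))\<^sup>2 \<le> 0"
        by (simp add: divide_le_0_iff)
      then show ?thesis by simp
    qed simp
  qed
  then have "AE x in lborel. AE y in lborel. phi x = phi y"
    using pair_sigma_finite.AE_pair[OF PS] by fastforce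
  then obtain x0 where x0: "AE y in lborel. phi x0 = phi y" using AE_ex_lborel by blast
  have "(\<integral>\<^sup>+ x. ennreal ((cmod (phi x))\<^sup>2) \<partial>lborel) = (\<integral>\<^sup>+ (x::real). ennreal ((cmod (phi x0))\<^sup>2) \<partial>lborel)"
    by (rule nn_integral_cong_AE) (use x0 in \<open>auto elim: eventually_mono\<close>)
  also have "\<dots> = ennreal ((cmod (phi x0))\<^sup>2) * \<infinity>" by simp
  finally show False using nrm by (cases "phi x0 = 0") auto
qed

lemma Qs_pos:
  fixes s :: real and phi :: "real \<Rightarrow> complex"
  assumes "0 < s" and pm: "phi \<in> borel_measurable lborel"
    and nrm: "(\<integral>\<^sup>+ x. ennreal ((cmod (phi x))\<^sup>2) \<partial>lborel) = 1"
  shows "Qs s phi \<noteq> 0"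
proof
  assume Q0: "Qs s phi = 0"
  have [measurable]: "phi \<in> borel_measurable borel" using pm by simp
  have PS: "pair_sigma_finite lborel lborel"
    by (simp add: pair_sigma_finite_def lborel.sigma_finite_measure_axioms)
  have "AE p in lborel \<Otimes>\<^sub>M lborel. ennreal (\<bar>fst p - snd p\<bar> powr (2 * s - 1) * cmod (phi (fst p)) * cmod (phi (snd p))) = 0"
  proof -
    have m: "(\<lambda>p. ennreal (\<bar>fst p - snd p\<bar> powr (2 * s - 1) * cmod (phi (fst p)) * cmod (phi (snd p)))) \<in> borel_measurable (lborel \<Otimes>\<^sub>M lborel)"
      by measurable
    show ?thesis using Q0 unfolding Qs_def nn_integral_0_iff_AE[OF m] .
  qed
  then have "AE p in lborel \<Otimes>\<^sub>M lborel. fst p = snd p \<or> phi (fst p) = 0 \<or> phi (snd p) = 0"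
  proof (rule eventually_mono)
    fix p :: "real \<times> real"
    assume h: "ennreal (\<bar>fst p - snd p\<bar> powr (2 * s - 1) * cmod (phi (fst p)) * cmod (phi (snd p))) = 0"
    show "fst p = snd p \<or> phi (fst p) = 0 \<or> phi (snd p) = 0"
    proof (cases "fst p = snd p")
      case False
      then have "0 < \<bar>fst p - snd p\<bar> powr (2 * s - 1)" by simp
      moreover have "\<bar>fst p - snd p\<bar> powr (2 * s - 1) * cmod (phi (fst p)) * cmod (phi (snd p)) \<le> 0"
        using h by (simp only: ennreal_eq_0_iff)
      ultimately have "cmod (phi (fst p)) * cmod (phi (snd p)) \<le> 0"
        by (simp add: mult_le_0_iff mult.assoc zero_le_mult_iff)
      then have "cmod (phi (fst p)) * cmod (phi (snd p)) = 0"
        by (meson antisym mult_nonneg_nonneg norm_ge_zero)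
      then show ?thesis by simp
    qed simp
  qed
  then have A: "AE x in lborel. AE y in lborel. x = y \<or> phi x = 0 \<or> phi y = 0"
    using pair_sigma_finite.AE_pair[OF PS] by fastforce
  have B: "AE x in lborel. AE y in lborel. phi x = 0 \<or> phi y = 0"
    using A
  proof (rule eventually_mono)
    fix x assume "AE y in lborel. x = y \<or> phi x = 0 \<or> phi y = 0"
    then show "AE y in lborel. phi x = 0 \<or> phi y = 0"
      using AE_lborel_singleton[of x] by eventually_elim auto
  qed
  show False
  proof (cases "AE x in lborel. phi x = 0")
    case True
    then show False using zero_norm[OF True] nrm by simp
  next
    case False
    have "\<exists>x. (AE y in lborel. phi x = 0 \<or> phi y = 0) \<and> phi x \<noteq> 0"
    proof (rule ccontr)
      assume "\<not> ?thesis"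
      then have "AE x in lborel. phi x = 0" using B by (auto elim: eventually_mono)
      then show False using False by simp
    qed
    then obtain x where x: "AE y in lborel. phi x = 0 \<or> phi y = 0" "phi x \<noteq> 0" by blast
    have "AE y in lborel. phi y = 0" using x by (auto elim: eventually_mono)
    then show False using zero_norm nrm by fastforce
  qed
qed
theorem theorem3p1:
  fixes s :: real and phi :: "real \<Rightarrow> complex"
  assumes "0 < s" and "s < 1/2"
    and "phi \<in> borel_measurable lborel"
    and "(\<integral>\<^sup>+ x. ennreal ((cmod (phi x))\<^sup>2) \<partial>lborel) = 1"
  shows "ennreal (gamma s) \<le> Qs s phi * Es s phi"
proof -
  note s0 = assms(1) and s1 = assms(2)
  have Q0: "Qs s phi \<noteq> 0" using Qs_pos[OF assms(1,3,4)] .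
  have E0: "Es s phi \<noteq> 0" using Es_pos[OF assms(1,3,4)] .
  show ?thesis
  proof (cases "Qs s phi = top \<or> Es s phi = top")
    case True
    then have "Qs s phi * Es s phi = top" using Q0 E0 by (auto simp: ennreal_mult_eq_top_iff)
    then show ?thesis by simp
  next
    case False
    then obtain q e where q: "Qs s phi = ennreal q" "0 \<le> q" and e: "Es s phi = ennreal e" "0 \<le> e"
      by (metis ennreal_cases)
    have qp: "0 < q" using q Q0 by (cases "q = 0") auto
    define t where "t = 1 / (2 * s * q)"
    have t0: "0 < t" unfolding t_def using qp s0 by simp
    define R where "R = t powr (- 1 / (2 * s))"
    have R0: "0 < R" unfolding R_def using t0 by simp
    have Rt: "R powr (- 2 * s) = t"
      unfolding R_def using s0 t0 by (simp add: powr_powr)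
    have Rt2: "R powr (- (4 * s)) = t\<^sup>2"
    proof -
      have "R powr (- (4 * s)) = (R powr (- 2 * s)) powr 2" using R0 by (simp add: powr_powr)
      then show ?thesis using Rt t0 by (simp add: powr_numeral)
    qed
    have "ennreal (2 * (R powr (- 2 * s) / s)) \<le> Es s phi + ennreal (2 * R powr (- (4 * s))) * Qs s phi"
      by (rule key[OF s0 s1 R0 assms(3,4)])
    also have "\<dots> = ennreal (e + 2 * t\<^sup>2 * q)"
      using e q Rt2 by (simp add: ennreal_mult[symmetric] ennreal_plus[symmetric] del: ennreal_plus)
    finally have ineq: "2 * (t / s) \<le> e + 2 * t\<^sup>2 * q"
      using e q s0 t0 Rt by (subst (asm) ennreal_le_iff) auto
    have a: "2 * (t / s) = 1 / (s\<^sup>2 * q)" unfolding t_def using s0 qp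
      by (simp add: field_simps power2_eq_square)
    have b: "2 * t\<^sup>2 * q = 1 / (2 * s\<^sup>2 * q)" unfolding t_def using s0 qp
      by (simp add: field_simps power2_eq_square)
    have c: "1 / (s\<^sup>2 * q) = 2 * (1 / (2 * s\<^sup>2 * q))" by simp
    have "1 / (2 * s\<^sup>2 * q) \<le> e" using ineq a b c by linarith
    then have "1 / (2 * s\<^sup>2) \<le> q * e" using s0 qp by (simp add: field_simps)
    then have "gamma s \<le> q * e" using gamma_bound[OF s0 s1] by linarith
    then have "ennreal (gamma s) \<le> ennreal (q * e)" by (rule ennreal_leI)
    also have "\<dots> = Qs s phi * Es s phi" using q e by (simp add: ennreal_mult)
    finally show ?thesis .
  qed
qed

end
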